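(* Let $f\in\mathfrak{D}$ have degree $j$ and $A=R/\operatorname{Ann}_R f$. For all integers $a\ge 0$ and $i$ there are $\mathsf{k}$-vector space isomorphisms $$Q_A(a)_i\cong\frac{(\mathfrak{m}^{\,i}\circ f)_{\le j-a-i}}{(\mathfrak{m}^{\,i}\circ f)_{\le j-a-1-i}+(\mathfrak{m}^{\,i+1}\circ f)_{\le j-a-i}},$$ and $$Q_A^\vee(a)_i\cong\frac{(\mathfrak{m}^{\,j-a-i}\circ f)_{\le i}}{(\mathfrak{m}^{\,j-a-i}\circ f)_{\le i-1}+(\mathfrak{m}^{\,j+1-a-i}\circ f)_{\le i}}.$$
   Context: Let $\mathsf{k}$ be a field, $R=\mathsf{k}\{x_1,\ldots,x_r\}$ the formal power series ring with maximal ideal $\mathfrak{m}=\mathfrak{m}_R$, and $\mathfrak{D}=\mathsf{k}_{DP}[X_1,\ldots,X_r]$ the divided power algebra, on which $R$ acts by contraction ($x^{\alpha}\circ X^{[\beta]}=X^{[\beta-\alpha]}$ if $\beta\ge\alpha$ componentwise, $0$ otherwise). For $f\in\mathfrak{D}$ of degree $j$, $A=R/\operatorname{Ann}_R f$ is Artinian Gorenstein of socle degree $j$ with maximal ideal $\mathfrak{m}_A$. Notation: $\mathfrak{m}^{\,s}\circ f=\{\varphi\circ f:\varphi\in\mathfrak{m}^s\}$, and for a subspace $V\subseteq\mathfrak{D}$, $V_{\le t}=V\cap\mathfrak{D}_{\le t}$ (elements of degree at most $t$). The ideal $C_A(a)$ of $A^*=\bigoplus_i\mathfrak{m}_A^i/\mathfrak{m}_A^{i+1}$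 has degree-$i$ part equal to the image in $\mathfrak{m}_A^i/\mathfrak{m}_A^{i+1}$ of $\mathfrak{m}_A^i\cap(0:\mathfrak{m}_A^{\,j+1-a-i})$, and $Q_A(a)=C_A(a)/C_A(a+1)$. The dual $Q_A^\vee(a)$ is graded so that $Q_A^\vee(a)_i=\operatorname{Hom}_{\mathsf{k}}(Q_A(a)_{j-a-i},\mathsf{k})$ (the pairing $Q_A(a)_i\times Q_A(a)_{j-a-i}\to\mathsf{k}$ induced by $(h,h')\mapsto (hh'\circ f)(0)$ is exact). *)

theory Defs
  imports Main "HOL-Library.Function_Algebras"
begin

text \<open>Both formal power series in R = k{x_1..x_r} and divided power polynomials in
  D = k_DP[X_1..X_r] are represented by their coefficient functions on multi-indices
  (x^alpha resp. X^[alpha] has coefficient at alpha).\<close>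

definition midx :: "nat \<Rightarrow> (nat \<Rightarrow> nat) set" where
  "midx r = {\<alpha>. \<forall>i\<ge>r. \<alpha> i = 0}"

definition tdeg :: "nat \<Rightarrow> (nat \<Rightarrow> nat) \<Rightarrow> nat" where
  "tdeg r \<alpha> = (\<Sum>i<r. \<alpha> i)"

definition PS :: "nat \<Rightarrow> ((nat \<Rightarrow> nat) \<Rightarrow> 'k::field) set" where
  "PS r = {\<phi>. \<forall>\<alpha>. \<alpha> \<notin> midx r \<longrightarrow> \<phi> \<alpha> = 0}"

definition DP :: "nat \<Rightarrow> ((nat \<Rightarrow> nat) \<Rightarrow> 'k::field) set" where
  "DP r = {F \<in> PS r. finite {\<beta>. F \<beta> \<noteq> 0}}"

definition ps_mult :: "((nat \<Rightarrow> nat) \<Rightarrow> 'k::field) \<Rightarrow> ((nat \<Rightarrow> nat) \<Rightarrow> 'k) \<Rightarrow> (nat \<Rightarrow> nat) \<Rightarrow> 'k" where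
  "ps_mult \<phi> \<psi> = (\<lambda>\<gamma>. \<Sum>\<alpha>\<in>{\<alpha>. \<alpha> \<le> \<gamma>}. \<phi> \<alpha> * \<psi> (\<gamma> - \<alpha>))"

text \<open>Contraction action of R on D: x^alpha o X^[beta] = X^[beta - alpha] if alpha \<le> beta, else 0,
  extended linearly (the sum is finite as F has finite support).\<close>
definition contr :: "((nat \<Rightarrow> nat) \<Rightarrow> 'k::field) \<Rightarrow> ((nat \<Rightarrow> nat) \<Rightarrow> 'k) \<Rightarrow> (nat \<Rightarrow> nat) \<Rightarrow> 'k" where
  "contr \<phi> F = (\<lambda>\<gamma>. \<Sum>\<beta>\<in>{\<beta>. F \<beta> \<noteq> 0}. if \<gamma> \<le> \<beta> then \<phi> (\<beta> - \<gamma>) * F \<beta> else 0)"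

definition dp_deg :: "nat \<Rightarrow> ((nat \<Rightarrow> nat) \<Rightarrow> 'k::field) \<Rightarrow> nat" where
  "dp_deg r F = Max (tdeg r ` {\<beta>. F \<beta> \<noteq> 0})"

text \<open>The power m^s of the maximal ideal of R (for s \<le> 0 this is R itself).\<close>
definition mpow :: "nat \<Rightarrow> int \<Rightarrow> ((nat \<Rightarrow> nat) \<Rightarrow> 'k::field) set" where
  "mpow r s = {\<phi> \<in> PS r. \<forall>\<alpha>. int (tdeg r \<alpha>) < s \<longrightarrow> \<phi> \<alpha> = 0}"

definition Ann :: "nat \<Rightarrow> ((nat \<Rightarrow> nat) \<Rightarrow> 'k::field) \<Rightarrow> ((nat \<Rightarrow> nat) \<Rightarrow> 'k) set" where
  "Ann r f = {\<phi> \<in> PS r. contr \<phi> f = 0}"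

definition act :: "((nat \<Rightarrow> nat) \<Rightarrow> 'k::field) set \<Rightarrow> ((nat \<Rightarrow> nat) \<Rightarrow> 'k) \<Rightarrow> ((nat \<Rightarrow> nat) \<Rightarrow> 'k) set" where
  "act S f = (\<lambda>\<phi>. contr \<phi> f) ` S"

definition le_deg :: "nat \<Rightarrow> ((nat \<Rightarrow> nat) \<Rightarrow> 'k::field) set \<Rightarrow> int \<Rightarrow> ((nat \<Rightarrow> nat) \<Rightarrow> 'k) set" where
  "le_deg r V t = {F \<in> V. \<forall>\<beta>. F \<beta> \<noteq> 0 \<longrightarrow> int (tdeg r \<beta>) \<le> t}"

definition ssum :: "'a::plus set \<Rightarrow> 'a set \<Rightarrow> 'a set" where
  "ssum U W = {u + w | u w. u \<in> U \<and> w \<in> W}"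

text \<open>Preimage in R of m_A^i (A = R / Ann f).\<close>
definition mA_pre :: "nat \<Rightarrow> ((nat \<Rightarrow> nat) \<Rightarrow> 'k::field) \<Rightarrow> int \<Rightarrow> ((nat \<Rightarrow> nat) \<Rightarrow> 'k) set" where
  "mA_pre r f i = ssum (mpow r i) (Ann r f)"

text \<open>The class of phi lies in (0 : m_A^k).\<close>
definition ann_pow :: "nat \<Rightarrow> ((nat \<Rightarrow> nat) \<Rightarrow> 'k::field) \<Rightarrow> ((nat \<Rightarrow> nat) \<Rightarrow> 'k) \<Rightarrow> int \<Rightarrow> bool" where
  "ann_pow r f \<phi> k = (\<forall>\<psi>\<in>mpow r k. ps_mult \<phi> \<psi> \<in> Ann r f)"

text \<open>Preimage in R of C_A(a)_i \<subseteq> m_A^i/m_A^{i+1}, i.e. of the image of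
  m_A^i \<inter> (0 : m_A^{j+1-a-i}); for i < 0 this is all of R (A^*_i = 0).\<close>
definition C_pre :: "nat \<Rightarrow> ((nat \<Rightarrow> nat) \<Rightarrow> 'k::field) \<Rightarrow> int \<Rightarrow> int \<Rightarrow> int \<Rightarrow> ((nat \<Rightarrow> nat) \<Rightarrow> 'k) set" where
  "C_pre r f j a i =
     ssum {\<phi> \<in> mA_pre r f i. ann_pow r f \<phi> (j + 1 - a - i)} (mA_pre r f (i + 1))"

definition sc :: "'k::field \<Rightarrow> ('a \<Rightarrow> 'k) \<Rightarrow> 'a \<Rightarrow> 'k" where
  "sc c x = (\<lambda>t. c * x t)"

definition lin_on :: "('a \<Rightarrow> 'k::field) set \<Rightarrow> (('a \<Rightarrow> 'k) \<Rightarrow> ('b \<Rightarrow> 'k)) \<Rightarrow> bool" where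
  "lin_on V g \<longleftrightarrow> (\<forall>x\<in>V. \<forall>y\<in>V. g (x + y) = g x + g y) \<and> (\<forall>c. \<forall>x\<in>V. g (sc c x) = sc c (g x))"

text \<open>Linear functionals on V (zero outside V, to make them unique).\<close>
definition functional_on :: "('a \<Rightarrow> 'k::field) set \<Rightarrow> (('a \<Rightarrow> 'k) \<Rightarrow> 'k) \<Rightarrow> bool" where
  "functional_on V l \<longleftrightarrow> (\<forall>x\<in>V. \<forall>y\<in>V. l (x + y) = l x + l y) \<and> (\<forall>c. \<forall>x\<in>V. l (sc c x) = c * l x)
      \<and> (\<forall>x. x \<notin> V \<longrightarrow> l x = 0)"

text \<open>Hom_k(V/U, k), realized as the functionals on V vanishing on U.\<close>
definition dual_quot :: "('a \<Rightarrow> 'k::field) set \<Rightarrow> ('a \<Rightarrow> 'k) set \<Rightarrow> (('a \<Rightarrow> 'k) \<Rightarrow> 'k) set" where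
  "dual_quot V U = {l. functional_on V l \<and> (\<forall>u\<in>U. l u = 0)}"

text \<open>V/U and V'/U' are isomorphic k-vector spaces: there is a linear map V \<rightarrow> V'
  inducing a bijection V/U \<rightarrow> V'/U'.\<close>
definition quot_iso :: "('a \<Rightarrow> 'k::field) set \<Rightarrow> ('a \<Rightarrow> 'k) set \<Rightarrow> ('b \<Rightarrow> 'k) set \<Rightarrow> ('b \<Rightarrow> 'k) set \<Rightarrow> bool" where
  "quot_iso V U V' U' \<longleftrightarrow> U \<subseteq> V \<and> U' \<subseteq> V' \<and>
     (\<exists>g. lin_on V g \<and> g ` V \<subseteq> V' \<and> (\<forall>y\<in>V'. \<exists>x\<in>V. y - g x \<in> U') \<and>
          (\<forall>x\<in>V. g x \<in> U' \<longleftrightarrow> x \<in> U))"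

end

theory Submission
  imports Defs "HOL.Vector_Spaces"
begin


interpretation vs: vector_space "sc :: 'k::field \<Rightarrow> ('a \<Rightarrow> 'k) \<Rightarrow> 'a \<Rightarrow> 'k"
  by unfold_locales (auto simp: sc_def fun_eq_iff algebra_simps)

interpretation vsp: vector_space_pair "sc :: 'k::field \<Rightarrow> ('a \<Rightarrow> 'k) \<Rightarrow> 'a \<Rightarrow> 'k" "sc :: 'k \<Rightarrow> ('b \<Rightarrow> 'k) \<Rightarrow> 'b \<Rightarrow> 'k"
  by unfold_locales

lemma sc_minus1: "sc (-1) x = - x"
  by (simp add: sc_def fun_eq_iff)

lemma quot_iso_Z:
  fixes V U W :: "('a \<Rightarrow> 'k::field) set" and V' U' :: "('b \<Rightarrow> 'k) set"
    and p :: "('a \<Rightarrow> 'k) \<Rightarrow> ('b \<Rightarrow> 'k)"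
  assumes sV: "vs.subspace V" and sU: "vs.subspace U" and sW: "vs.subspace W"
    and sU': "vs.subspace U'" and UV: "U \<subseteq> V" and WV: "W \<subseteq> V" and UV': "U' \<subseteq> V'"
    and padd: "\<And>x y. p (x + y) = p x + p y" and psc: "\<And>c x. p (sc c x) = sc c (p x)"
    and pW: "p ` W \<subseteq> V'" and VW: "\<forall>v\<in>V. \<exists>w\<in>W. v - w \<in> U"
    and surj: "\<forall>y\<in>V'. \<exists>w\<in>W. y - p w \<in> U'" and ker: "\<forall>w\<in>W. p w \<in> U' \<longleftrightarrow> w \<in> U"
  shows "quot_iso V U V' U'"
proof -
  have pdiff: "p (x - y) = p x - p y" for x y
  proof -
    have "p (x - y) = p (x + sc (-1) y)" by (simp add: sc_minus1)
    also have "\<dots> = p x + sc (-1) (p y)" by (simp only: padd psc)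
    also have "\<dots> = p x - p y" by (simp add: sc_minus1)
    finally show ?thesis .
  qed
  have p0: "p 0 = 0" by (metis pdiff diff_self)
  obtain B where BV: "B \<subseteq> V" and Bi: "vs.independent B" and VB: "V \<subseteq> vs.span B"
    using vs.basis_exists[of V] by metis
  define wb where "wb b = (SOME w. w \<in> W \<and> b - w \<in> U)" for b
  have wb: "wb b \<in> W \<and> b - wb b \<in> U" if "b \<in> B" for b
  proof -
    have "b \<in> V" using BV that by blast
    then obtain w where "w \<in> W" "b - w \<in> U" using VW by blast
    then show ?thesis unfolding wb_def using someI[of "\<lambda>w. w \<in> W \<and> b - w \<in> U" w] by blast
  qed
  define g where "g = vsp.construct B (\<lambda>b. p (wb b))"
  have lin: "Vector_Spaces.linear sc sc g" unfolding g_def by (rule vsp.linear_construct) (rule Bi)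
  have gadd: "g (x + y) = g x + g y" for x y by (rule vsp.linear_add[OF lin])
  have gsc: "g (sc c x) = sc c (g x)" for c x by (rule vsp.linear_scale[OF lin])
  have g0: "g 0 = 0" by (rule vsp.linear_0[OF lin])
  have gB: "g b = p (wb b)" if "b \<in> B" for b
    unfolding g_def by (rule vsp.construct_basis[OF Bi that])
  have key: "\<exists>w\<in>W. v - w \<in> U \<and> g v = p w" if "v \<in> vs.span B" for v
    using that
  proof (induction rule: vs.span_induct_alt)
    case base
    show ?case
    proof (rule bexI[of _ 0])
      show "0 \<in> W" by (rule vs.subspace_0[OF sW])
      show "0 - 0 \<in> U \<and> g 0 = p 0" using vs.subspace_0[OF sU] by (simp add: g0 p0)
    qed
  next
    case (step c x y)
    then obtain w where w: "w \<in> W" "y - w \<in> U" "g y = p w" by blast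
    have m1: "sc c (wb x) + w \<in> W" using wb[OF step(1)] w sW
      by (simp add: vs.subspace_add vs.subspace_scale)
    have m2: "sc c x + y - (sc c (wb x) + w) = sc c (x - wb x) + (y - w)"
      by (simp add: vs.scale_right_diff_distrib)
    have m3: "sc c (x - wb x) + (y - w) \<in> U" using wb[OF step(1)] w sU
      by (simp add: vs.subspace_add vs.subspace_scale)
    have m4: "g (sc c x + y) = p (sc c (wb x) + w)"
    proof -
      have "g (sc c x + y) = sc c (g x) + g y" by (simp only: gadd gsc)
      also have "\<dots> = sc c (p (wb x)) + p w" by (simp only: gB[OF step(1)] w(3))
      also have "\<dots> = p (sc c (wb x) + w)" by (simp only: padd psc)
      finally show ?thesis .
    qed
    show ?case
    proof (rule bexI[OF _ m1], rule conjI)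
      show "sc c x + y - (sc c (wb x) + w) \<in> U" unfolding m2 by (rule m3)
    qed (rule m4)
  qed
  have key': "\<exists>w\<in>W. v - w \<in> U \<and> g v = p w" if "v \<in> V" for v
    using key that VB by blast
  show ?thesis unfolding quot_iso_def
  proof (intro conjI exI[of _ g] ballI)
    show "U \<subseteq> V" "U' \<subseteq> V'" by fact+
    show "lin_on V g" unfolding lin_on_def by (simp add: gadd gsc)
    show "g ` V \<subseteq> V'"
    proof
      fix z assume "z \<in> g ` V"
      then obtain v where v: "v \<in> V" "z = g v" by blast
      obtain w where "w \<in> W" "g v = p w" using key'[OF v(1)] by blast
      then show "z \<in> V'" using pW v(2) by blast
    qed
  next
    fix y assume y: "y \<in> V'"
    then obtain w where w: "w \<in> W" "y - p w \<in> U'" using surj by blast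
    obtain w2 where w2: "w2 \<in> W" "w - w2 \<in> U" "g w = p w2" using key' w WV by blast
    have "w - w2 \<in> W" using w w2 sW by (simp add: vs.subspace_diff)
    then have "p (w - w2) \<in> U'" using ker w2 by blast
    then have "(y - p w) + p (w - w2) \<in> U'" using w sU' by (simp add: vs.subspace_add)
    then have "y - g w \<in> U'" by (simp add: pdiff w2)
    then show "\<exists>x\<in>V. y - g x \<in> U'" using w WV by blast
  next
    fix x assume x: "x \<in> V"
    obtain w where w: "w \<in> W" "x - w \<in> U" "g x = p w" using key' x by blast
    have "x \<in> U \<longleftrightarrow> w \<in> U"
    proof
      assume "x \<in> U" then show "w \<in> U" using w sU vs.subspace_diff[OF sU, of x "x - w"] by simp
    next
      assume "w \<in> U" then show "x \<in> U" using w sU vs.subspace_add[OF sU, of "x - w" w] by simp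
    qed
    then show "g x \<in> U' \<longleftrightarrow> x \<in> U" using ker w by simp
  qed
qed


lemma sum_fun_apply: "(\<Sum>a\<in>A. f a) x = (\<Sum>a\<in>A. f a x)"
  by (induction A rule: infinite_finite_induct) auto

lemma sc_apply: "sc c y x = c * y x"
  by (simp add: sc_def)

lemma lin_on_sum:
  fixes h :: "('a \<Rightarrow> 'k::field) \<Rightarrow> ('b \<Rightarrow> 'k)"
  assumes hl: "lin_on V h" and sV: "vs.subspace V" and fF: "finite F" and xV: "\<forall>e\<in>F. x e \<in> V"
  shows "h (\<Sum>e\<in>F. sc (c e) (x e)) = (\<Sum>e\<in>F. sc (c e) (h (x e))) \<and> (\<Sum>e\<in>F. sc (c e) (x e)) \<in> V"
  using fF xV
proof (induction F rule: finite_induct)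
  case empty
  have "h 0 = h (sc 0 0)" by simp
  also have "\<dots> = sc 0 (h 0)" using hl vs.subspace_0[OF sV] unfolding lin_on_def by blast
  finally have "h 0 = 0" by simp
  then show ?case unfolding sum.empty using vs.subspace_0[OF sV] by blast
next
  case (insert a F)
  have a: "sc (c a) (x a) \<in> V" using insert.prems sV by (simp add: vs.subspace_scale)
  have IH: "h (\<Sum>e\<in>F. sc (c e) (x e)) = (\<Sum>e\<in>F. sc (c e) (h (x e)))"
     "(\<Sum>e\<in>F. sc (c e) (x e)) \<in> V" using insert by auto
  have "h (sc (c a) (x a) + (\<Sum>e\<in>F. sc (c e) (x e))) = h (sc (c a) (x a)) + h (\<Sum>e\<in>F. sc (c e) (x e))"
    using hl a IH(2) unfolding lin_on_def by blast
  also have "h (sc (c a) (x a)) = sc (c a) (h (x a))"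
    using hl insert.prems unfolding lin_on_def by blast
  finally show ?case unfolding sum.insert[OF insert.hyps] IH(1) using vs.subspace_add[OF sV a IH(2)] by blast
qed

lemma functional_on_sum:
  fixes l :: "('a \<Rightarrow> 'k::field) \<Rightarrow> 'k"
  assumes hl: "functional_on V l" and sV: "vs.subspace V" and fF: "finite F" and xV: "\<forall>e\<in>F. x e \<in> V"
  shows "l (\<Sum>e\<in>F. sc (c e) (x e)) = (\<Sum>e\<in>F. c e * l (x e))"
  using fF xV
proof (induction F rule: finite_induct)
  case empty
  have "l 0 = l (sc 0 0)" by simp
  also have "\<dots> = 0 * l 0" using hl vs.subspace_0[OF sV] unfolding functional_on_def by blast
  finally have "l 0 = 0" by simp
  then show ?case unfolding sum.empty .
next
  case (insert a F)
  have a: "sc (c a) (x a) \<in> V" using insert.prems sV by (simp add: vs.subspace_scale)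
  have IH: "l (\<Sum>e\<in>F. sc (c e) (x e)) = (\<Sum>e\<in>F. c e * l (x e))" using insert by auto
  have IH2: "(\<Sum>e\<in>F. sc (c e) (x e)) \<in> V"
    using insert.prems sV by (intro vs.subspace_sum) (auto simp: vs.subspace_scale)
  have "l (\<Sum>e\<in>insert a F. sc (c e) (x e)) = l (sc (c a) (x a) + (\<Sum>e\<in>F. sc (c e) (x e)))"
    using insert.hyps by simp
  also have "\<dots> = l (sc (c a) (x a)) + l (\<Sum>e\<in>F. sc (c e) (x e))"
    using hl a IH2 unfolding functional_on_def by blast
  also have "l (sc (c a) (x a)) = c a * l (x a)"
    using hl insert.prems unfolding functional_on_def by blast
  finally show ?case using insert.hyps IH by simp
qed

lemma reduce_spanmod:
  fixes V' U' :: "('b \<Rightarrow> 'k::field) set"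
  assumes sU': "vs.subspace U'"
  shows "finite E \<Longrightarrow> E \<subseteq> V' \<Longrightarrow> (\<forall>y\<in>V'. \<exists>c. y - (\<Sum>e\<in>E. sc (c e) e) \<in> U') \<Longrightarrow>
    \<exists>E'. finite E' \<and> E' \<subseteq> V' \<and> (\<forall>y\<in>V'. \<exists>c. y - (\<Sum>e\<in>E'. sc (c e) e) \<in> U')
       \<and> (\<forall>c. (\<Sum>e\<in>E'. sc (c e) e) \<in> U' \<longrightarrow> (\<forall>e\<in>E'. c e = 0))"
proof (induction "card E" arbitrary: E rule: less_induct)
  case less
  show ?case
  proof (cases "\<forall>c. (\<Sum>e\<in>E. sc (c e) e) \<in> U' \<longrightarrow> (\<forall>e\<in>E. c e = 0)")
    case True then show ?thesis using less.prems by blast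
  next
    case False
    then obtain c e0 where cU: "(\<Sum>e\<in>E. sc (c e) e) \<in> U'" and e0: "e0 \<in> E" "c e0 \<noteq> 0" by blast
    have fE: "finite E" by fact
    have sp: "\<exists>c. y - (\<Sum>e\<in>E - {e0}. sc (c e) e) \<in> U'" if y: "y \<in> V'" for y
    proof -
      obtain d where d: "y - (\<Sum>e\<in>E. sc (d e) e) \<in> U'" using less.prems y by blast
      define d' where "d' e = d e - d e0 * c e / c e0" for e
      have eq: "y - (\<Sum>e\<in>E - {e0}. sc (d' e) e)
          = (y - (\<Sum>e\<in>E. sc (d e) e)) + sc (d e0 / c e0) (\<Sum>e\<in>E. sc (c e) e)"
      proof (rule ext)
        fix x
        have "(y - (\<Sum>e\<in>E - {e0}. sc (d' e) e)) x = y x - (\<Sum>e\<in>E - {e0}. d e * e x) + (\<Sum>e\<in>E - {e0}. d e0 / c e0 * (c e * e x))"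
          by (simp add: sum_fun_apply sc_apply d'_def algebra_simps sum_subtractf sum_distrib_left)
        also have "\<dots> = y x - (d e0 * e0 x + (\<Sum>e\<in>E - {e0}. d e * e x)) + d e0 / c e0 * (c e0 * e0 x + (\<Sum>e\<in>E - {e0}. c e * e x))"
          using e0(2) by (simp add: algebra_simps sum_distrib_left)
        also have "\<dots> = ((y - (\<Sum>e\<in>E. sc (d e) e)) + sc (d e0 / c e0) (\<Sum>e\<in>E. sc (c e) e)) x"
          by (simp add: sum_fun_apply sc_apply sum.remove[OF fE e0(1)])
        finally show "(y - (\<Sum>e\<in>E - {e0}. sc (d' e) e)) x = ((y - (\<Sum>e\<in>E. sc (d e) e)) + sc (d e0 / c e0) (\<Sum>e\<in>E. sc (c e) e)) x" .
      qed
      have "(y - (\<Sum>e\<in>E. sc (d e) e)) + sc (d e0 / c e0) (\<Sum>e\<in>E. sc (c e) e) \<in> U'"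
        using d cU sU' by (simp add: vs.subspace_add vs.subspace_scale)
      then show ?thesis unfolding eq[symmetric] by blast
    qed
    have "card (E - {e0}) < card E" by (rule card_Diff1_less[OF fE e0(1)])
    moreover have "finite (E - {e0})" "E - {e0} \<subseteq> V'" using fE less.prems by auto
    moreover have "\<forall>y\<in>V'. \<exists>c. y - (\<Sum>e\<in>E - {e0}. sc (c e) e) \<in> U'" using sp by blast
    ultimately show ?thesis by (rule less.hyps)
  qed
qed


lemma quot_iso_dual:
  fixes V U :: "('a \<Rightarrow> 'k::field) set" and V' U' :: "('b \<Rightarrow> 'k) set" and S :: "'b set"
  assumes qi: "quot_iso V U V' U'" and sV: "vs.subspace V" and sV': "vs.subspace V'"
    and sU': "vs.subspace U'" and fS: "finite S" and supp: "\<forall>y\<in>V'. \<forall>x. y x \<noteq> 0 \<longrightarrow> x \<in> S"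
  shows "quot_iso (dual_quot V U) {0} V' U'"
proof -
  from qi obtain h where UV: "U \<subseteq> V" and UV': "U' \<subseteq> V'" and hl: "lin_on V h" and hV: "h ` V \<subseteq> V'"
    and hsurj: "\<forall>y\<in>V'. \<exists>x\<in>V. y - h x \<in> U'" and hker: "\<forall>x\<in>V. h x \<in> U' \<longleftrightarrow> x \<in> U"
    unfolding quot_iso_def by blast
  define \<delta> where "\<delta> s = (\<lambda>x. if x = s then (1::'k) else 0)" for s :: 'b
  have V'span: "V' \<subseteq> vs.span (\<delta> ` S)"
  proof
    fix y assume y: "y \<in> V'"
    have "y = (\<Sum>s\<in>S. sc (y s) (\<delta> s))"
    proof (rule ext)
      fix x
      have "(\<Sum>s\<in>S. sc (y s) (\<delta> s)) x = (\<Sum>s\<in>S. if x = s then y s else 0)"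
        by (simp add: sum_fun_apply sc_apply \<delta>_def if_distrib cong: if_cong)
      also have "\<dots> = y x" using fS supp y by (auto simp: sum.delta)
      finally show "y x = (\<Sum>s\<in>S. sc (y s) (\<delta> s)) x" by simp
    qed
    also have "\<dots> \<in> vs.span (\<delta> ` S)"
      by (intro vs.span_sum vs.span_scale vs.span_base) auto
    finally show "y \<in> vs.span (\<delta> ` S)" .
  qed
  obtain B where BV': "B \<subseteq> V'" and Bi: "vs.independent B" and V'B: "V' \<subseteq> vs.span B"
    using vs.basis_exists[of V'] by metis
  have fB: "finite B"
    using vs.independent_span_bound[OF finite_imageI[OF fS] Bi] BV' V'span by blast
  have spB: "\<forall>y\<in>V'. \<exists>c. y - (\<Sum>e\<in>B. sc (c e) e) \<in> U'"
  proof
    fix y assume "y \<in> V'"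
    then have "y \<in> range (\<lambda>u. \<Sum>v\<in>B. sc (u v) v)" using V'B vs.span_finite[OF fB] by blast
    then obtain c where "y = (\<Sum>v\<in>B. sc (c v) v)" by blast
    then show "\<exists>c. y - (\<Sum>e\<in>B. sc (c e) e) \<in> U'" using vs.subspace_0[OF sU'] by (intro exI[of _ c]) simp
  qed
  obtain E where fE: "finite E" and EV': "E \<subseteq> V'" and spE: "\<forall>y\<in>V'. \<exists>c. y - (\<Sum>e\<in>E. sc (c e) e) \<in> U'"
    and idE: "\<forall>c. (\<Sum>e\<in>E. sc (c e) e) \<in> U' \<longrightarrow> (\<forall>e\<in>E. c e = 0)"
    using reduce_spanmod[OF sU' fB BV' spB] by blast
  define ve where "ve e = (SOME v. v \<in> V \<and> e - h v \<in> U')" for e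
  have ve: "ve e \<in> V \<and> e - h (ve e) \<in> U'" if "e \<in> E" for e
  proof -
    have "e \<in> V'" using EV' that by blast
    then obtain v where "v \<in> V" "e - h v \<in> U'" using hsurj by blast
    then show ?thesis unfolding ve_def using someI[of "\<lambda>v. v \<in> V \<and> e - h v \<in> U'" v] by blast
  qed
  have hadd: "h (x + y) = h x + h y" if "x \<in> V" "y \<in> V" for x y using hl that unfolding lin_on_def by blast
  have hsc: "h (sc c x) = sc c (h x)" if "x \<in> V" for c x using hl that unfolding lin_on_def by blast
  have uniq: "\<forall>e\<in>E. d1 e = d2 e" if "z - (\<Sum>e\<in>E. sc (d1 e) e) \<in> U'" "z - (\<Sum>e\<in>E. sc (d2 e) e) \<in> U'" for z d1 d2
  proof -
    have "(z - (\<Sum>e\<in>E. sc (d1 e) e)) - (z - (\<Sum>e\<in>E. sc (d2 e) e)) \<in> U'"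
      by (rule vs.subspace_diff[OF sU' that])
    also have "(z - (\<Sum>e\<in>E. sc (d1 e) e)) - (z - (\<Sum>e\<in>E. sc (d2 e) e)) = (\<Sum>e\<in>E. sc (d2 e - d1 e) e)"
      by (simp add: vs.scale_left_diff_distrib sum_subtractf)
    finally have "(\<Sum>e\<in>E. sc ((\<lambda>e. d2 e - d1 e) e) e) \<in> U'" .
    then have "\<forall>e\<in>E. (\<lambda>e. d2 e - d1 e) e = 0" by (rule idE[THEN spec, THEN mp])
    then show ?thesis by simp
  qed
  define coef where "coef v = (SOME d. h v - (\<Sum>e\<in>E. sc (d e) e) \<in> U')" for v
  have coefP: "h v - (\<Sum>e\<in>E. sc (coef v e) e) \<in> U'" if "v \<in> V" for v
  proof -
    have "h v \<in> V'" using hV that by blast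
    then obtain d where "h v - (\<Sum>e\<in>E. sc (d e) e) \<in> U'" using spE by blast
    then show ?thesis unfolding coef_def by (rule someI[where P="\<lambda>d. h v - (\<Sum>e\<in>E. sc (d e) e) \<in> U'"])
  qed
  have coefU: "\<forall>e\<in>E. coef v e = d e" if "v \<in> V" "h v - (\<Sum>e\<in>E. sc (d e) e) \<in> U'" for v d
    using uniq[OF coefP[OF that(1)] that(2)] .
  define g where "g l = (\<Sum>e\<in>E. sc (l (ve e)) e)" for l :: "('a \<Rightarrow> 'k) \<Rightarrow> 'k"
  have gadd: "g (l1 + l2) = g l1 + g l2" for l1 l2
    by (simp add: g_def vs.scale_left_distrib sum.distrib)
  have gsc: "g (sc c l) = sc c (g l)" for c l
    by (simp add: g_def vs.scale_sum_right sc_apply)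
  have gV': "g l \<in> V'" for l
    unfolding g_def using EV' sV' by (intro vs.subspace_sum vs.subspace_scale) auto
  show ?thesis unfolding quot_iso_def
  proof (intro conjI exI[of _ g] ballI)
    show "{0} \<subseteq> dual_quot V U"
      by (auto simp: dual_quot_def functional_on_def sc_def)
    show "U' \<subseteq> V'" by fact
    show "lin_on (dual_quot V U) g" unfolding lin_on_def using gadd gsc by blast
    show "g ` dual_quot V U \<subseteq> V'" using gV' by blast
  next
    fix y assume y: "y \<in> V'"
    then obtain c where c: "y - (\<Sum>e\<in>E. sc (c e) e) \<in> U'" using spE by blast
    define l where "l v = (if v \<in> V then (\<Sum>e\<in>E. c e * coef v e) else 0)" for v
    have coef_add: "\<forall>e\<in>E. coef (x + z) e = coef x e + coef z e" if "x \<in> V" "z \<in> V" for x z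
    proof (rule coefU)
      show "x + z \<in> V" using that sV by (simp add: vs.subspace_add)
      have "(h x - (\<Sum>e\<in>E. sc (coef x e) e)) + (h z - (\<Sum>e\<in>E. sc (coef z e) e)) \<in> U'"
        using coefP that sU' by (simp add: vs.subspace_add)
      also have "(h x - (\<Sum>e\<in>E. sc (coef x e) e)) + (h z - (\<Sum>e\<in>E. sc (coef z e) e))
          = h (x + z) - (\<Sum>e\<in>E. sc (coef x e + coef z e) e)"
        by (simp add: hadd that vs.scale_left_distrib sum.distrib)
      finally show "h (x + z) - (\<Sum>e\<in>E. sc (coef x e + coef z e) e) \<in> U'" .
    qed
    have coef_sc: "\<forall>e\<in>E. coef (sc a x) e = a * coef x e" if "x \<in> V" for a x
    proof (rule coefU)
      show "sc a x \<in> V" using that sV by (simp add: vs.subspace_scale)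
      have "sc a (h x - (\<Sum>e\<in>E. sc (coef x e) e)) \<in> U'"
        using coefP that sU' by (simp add: vs.subspace_scale)
      also have "sc a (h x - (\<Sum>e\<in>E. sc (coef x e) e)) = h (sc a x) - (\<Sum>e\<in>E. sc (a * coef x e) e)"
        by (simp add: hsc that vs.scale_right_diff_distrib vs.scale_sum_right)
      finally show "h (sc a x) - (\<Sum>e\<in>E. sc (a * coef x e) e) \<in> U'" .
    qed
    have lfun: "functional_on V l" unfolding functional_on_def
    proof (intro conjI allI ballI impI)
      fix x z assume xz: "x \<in> V" "z \<in> V"
      then have "x + z \<in> V" using sV by (simp add: vs.subspace_add)
      then show "l (x + z) = l x + l z"
        using xz coef_add[OF xz] by (simp add: l_def sum.distrib distrib_left)
    next
      fix a x assume x: "x \<in> V"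
      then have "sc a x \<in> V" using sV by (simp add: vs.subspace_scale)
      then show "l (sc a x) = a * l x"
        using x coef_sc[OF x] by (simp add: l_def sum_distrib_left algebra_simps)
    next
      fix x assume "x \<notin> V" then show "l x = 0" by (simp add: l_def)
    qed
    have lU: "l u = 0" if "u \<in> U" for u
    proof -
      have uV: "u \<in> V" using that UV by blast
      have "\<forall>e\<in>E. coef u e = (\<lambda>_. 0) e"
        by (rule coefU[OF uV]) (use hker uV that in simp)
      then show ?thesis using uV by (simp add: l_def)
    qed
    have lve: "l (ve e0) = c e0" if e0: "e0 \<in> E" for e0
    proof -
      have v0: "ve e0 \<in> V" using ve[OF e0] by blast
      have "(\<Sum>e\<in>E. sc (if e = e0 then 1 else 0) e) = (\<Sum>e\<in>E. if e = e0 then e else 0)"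
        by (rule sum.cong) auto
      also have "\<dots> = e0" using fE e0 by (simp add: sum.delta')
      finally have s: "(\<Sum>e\<in>E. sc (if e = e0 then 1 else 0) e) = e0" .
      have "- (e0 - h (ve e0)) \<in> U'" using vs.subspace_neg[OF sU'] ve[OF e0] by blast
      then have "h (ve e0) - (\<Sum>e\<in>E. sc (if e = e0 then 1 else 0) e) \<in> U'" unfolding s by (simp only: minus_diff_eq)
      then have "\<forall>e\<in>E. coef (ve e0) e = (\<lambda>e. if e = e0 then 1 else 0) e" by (rule coefU[OF v0])
      then have "(\<Sum>e\<in>E. c e * coef (ve e0) e) = (\<Sum>e\<in>E. if e = e0 then c e else 0)"
        by (intro sum.cong) auto
      also have "\<dots> = c e0" using fE e0 by (simp add: sum.delta')
      finally show ?thesis using v0 by (simp add: l_def)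
    qed
    have "l \<in> dual_quot V U" unfolding dual_quot_def using lfun lU by blast
    moreover have "g l = (\<Sum>e\<in>E. sc (c e) e)" unfolding g_def by (rule sum.cong) (auto simp: lve)
    ultimately show "\<exists>l\<in>dual_quot V U. y - g l \<in> U'" using c by metis
  next
    fix l assume l: "l \<in> dual_quot V U"
    then have lfun: "functional_on V l" and lU: "\<forall>u\<in>U. l u = 0" unfolding dual_quot_def by auto
    show "g l \<in> U' \<longleftrightarrow> l \<in> {0}"
    proof
      assume "l \<in> {0}" then show "g l \<in> U'" using vs.subspace_0[OF sU'] by (simp add: g_def)
    next
      assume gU: "g l \<in> U'"
      then have "(\<Sum>e\<in>E. sc ((\<lambda>e. l (ve e)) e) e) \<in> U'" unfolding g_def by simp
      then have z: "\<forall>e\<in>E. (\<lambda>e. l (ve e)) e = 0" by (rule idE[THEN spec, THEN mp])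
      have "l v = 0" for v
      proof (cases "v \<in> V")
        case False then show ?thesis using lfun unfolding functional_on_def by blast
      next
        case True
        define d where "d = coef v"
        define w where "w = (\<Sum>e\<in>E. sc (d e) (ve e))"
        have veV: "\<forall>e\<in>E. ve e \<in> V" using ve by blast
        have hw: "h w = (\<Sum>e\<in>E. sc (d e) (h (ve e)))" and wV: "w \<in> V"
          using lin_on_sum[OF hl sV fE veV, of d] unfolding w_def by auto
        have vwV: "v - w \<in> V" using True wV sV by (simp add: vs.subspace_diff)
        have "h v = h (v - w) + h w" using hadd[OF vwV wV] by simp
        then have "h (v - w) = (h v - (\<Sum>e\<in>E. sc (d e) e)) + (\<Sum>e\<in>E. sc (d e) (e - h (ve e)))"
          by (simp add: hw vs.scale_right_diff_distrib sum_subtractf)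
        also have "\<dots> \<in> U'"
          using coefP[OF True] ve sU' unfolding d_def
          by (intro vs.subspace_add vs.subspace_sum vs.subspace_scale) auto
        finally have "v - w \<in> U" using hker vwV by blast
        then have l1: "l (v - w) = 0" using lU by blast
        have l2: "l w = 0" unfolding w_def using functional_on_sum[OF lfun sV fE veV, of d] z by simp
        have "l v = l (v - w) + l w" using lfun vwV wV unfolding functional_on_def
          by (metis diff_add_cancel)
        then show ?thesis using l1 l2 by simp
      qed
      then show "l \<in> {0}" by auto
    qed
  qed
qed



lemma fin_le:
  assumes "\<beta> \<in> midx r"
  shows "finite {\<gamma>::nat\<Rightarrow>nat. \<gamma> \<le> \<beta>}"
proof (rule inj_on_finite)
  let ?f = "\<lambda>\<gamma>::nat\<Rightarrow>nat. map \<gamma> [0..<r]"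
  show "inj_on ?f {\<gamma>. \<gamma> \<le> \<beta>}"
  proof (rule inj_onI)
    fix x y assume x: "x \<in> {\<gamma>. \<gamma> \<le> \<beta>}" and y: "y \<in> {\<gamma>. \<gamma> \<le> \<beta>}" and e: "?f x = ?f y"
    show "x = y"
    proof (rule ext)
      fix i show "x i = y i"
      proof (cases "i < r")
        case True then show ?thesis using e by (simp add: map_eq_conv)
      next
        case False
        then have "\<beta> i = 0" using assms by (simp add: midx_def)
        then show ?thesis using x y by (simp add: le_fun_def) (metis le_zero_eq)
      qed
    qed
  qed
  show "?f ` {\<gamma>. \<gamma> \<le> \<beta>} \<subseteq> {xs. set xs \<subseteq> {..tdeg r \<beta>} \<and> length xs = r}"
  proof clarsimp
    fix \<gamma> :: "nat \<Rightarrow> nat" and i assume g: "\<gamma> \<le> \<beta>" and i: "i < r"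
    have "\<gamma> i \<le> \<beta> i" using g by (simp add: le_fun_def)
    also have "\<beta> i \<le> tdeg r \<beta>" unfolding tdeg_def by (rule member_le_sum) (use i in auto)
    finally show "\<gamma> i \<le> tdeg r \<beta>" .
  qed
  show "finite {xs. set xs \<subseteq> {..tdeg r \<beta>} \<and> length xs = r}"
    by (rule finite_lists_length_eq) simp
qed

lemma le_midx: "\<gamma> \<le> \<beta> \<Longrightarrow> \<beta> \<in> midx r \<Longrightarrow> \<gamma> \<in> midx r"
  by (auto simp: midx_def le_fun_def) (metis le_zero_eq)

lemma tdeg_mono: "\<gamma> \<le> \<beta> \<Longrightarrow> tdeg r \<gamma> \<le> tdeg r \<beta>"
  unfolding tdeg_def by (rule sum_mono) (simp add: le_fun_def)

lemma tdeg_diff_le: "tdeg r (\<beta> - \<gamma>) \<le> tdeg r \<beta>"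
  unfolding tdeg_def by (rule sum_mono) simp

definition down :: "((nat \<Rightarrow> nat) \<Rightarrow> 'k::field) \<Rightarrow> (nat \<Rightarrow> nat) set" where
  "down F = {\<gamma>. \<exists>\<delta>. F \<delta> \<noteq> 0 \<and> \<gamma> \<le> \<delta>}"

lemma DP_supp: "F \<in> DP r \<Longrightarrow> F \<beta> \<noteq> 0 \<Longrightarrow> \<beta> \<in> midx r"
  by (auto simp: DP_def PS_def)

lemma DP_fin: "F \<in> DP r \<Longrightarrow> finite {\<beta>. F \<beta> \<noteq> 0}"
  by (auto simp: DP_def)

lemma down_eq: "down F = (\<Union>\<delta>\<in>{\<delta>. F \<delta> \<noteq> 0}. {\<gamma>. \<gamma> \<le> \<delta>})"
  by (auto simp: down_def)

lemma finite_down: "F \<in> DP r \<Longrightarrow> finite (down F)"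
  unfolding down_eq by (intro finite_UN_I DP_fin fin_le DP_supp) auto

lemma down_midx: "F \<in> DP r \<Longrightarrow> down F \<subseteq> midx r"
  by (auto simp: down_def intro: le_midx DP_supp)

lemma contr_supp: assumes "contr \<phi> F \<gamma> \<noteq> 0" shows "\<gamma> \<in> down F"
proof -
  obtain \<beta> where "\<beta> \<in> {\<beta>. F \<beta> \<noteq> 0}" "(if \<gamma> \<le> \<beta> then \<phi> (\<beta> - \<gamma>) * F \<beta> else 0) \<noteq> 0"
    using assms unfolding contr_def by (rule sum.not_neutral_contains_not_neutral)
  then show ?thesis unfolding down_def by (auto split: if_splits)
qed

lemma contr_DP: assumes "F \<in> DP r" shows "contr \<phi> F \<in> DP r"
proof -
  have s: "{\<beta>. contr \<phi> F \<beta> \<noteq> 0} \<subseteq> down F" using contr_supp by blast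
  show ?thesis unfolding DP_def PS_def
    using s down_midx[OF assms] finite_subset[OF s finite_down[OF assms]] by auto
qed

lemma contr_add: "contr (\<phi> + \<psi>) F = contr \<phi> F + contr \<psi> F"
  by (simp add: contr_def fun_eq_iff sum.distrib[symmetric] algebra_simps if_distrib cong: if_cong)

lemma contr_sc: "contr (sc c \<phi>) F = sc c (contr \<phi> F)"
  by (simp add: contr_def fun_eq_iff sc_def sum_distrib_left algebra_simps if_distrib cong: if_cong)

lemma contr_zero: "contr 0 F = 0"
  by (auto simp: contr_def fun_eq_iff intro!: sum.neutral)

lemma contr_diff: "contr (\<phi> - \<psi>) F = contr \<phi> F - contr \<psi> F"
  by (simp add: contr_def fun_eq_iff sum_subtractf[symmetric] algebra_simps if_distrib cong: if_cong)

lemma ps_mult_PS: assumes "\<phi> \<in> PS r" "\<psi> \<in> PS r" shows "ps_mult \<phi> \<psi> \<in> PS r"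
  unfolding PS_def
proof (intro CollectI allI impI)
  fix \<gamma> assume g: "\<gamma> \<notin> midx r"
  have "\<phi> \<alpha> * \<psi> (\<gamma> - \<alpha>) = 0" if "\<alpha> \<le> \<gamma>" for \<alpha>
  proof (cases "\<alpha> \<in> midx r")
    case True
    have "\<gamma> - \<alpha> \<notin> midx r"
    proof
      assume "\<gamma> - \<alpha> \<in> midx r"
      then have "\<gamma> \<in> midx r" using True that by (auto simp: midx_def le_fun_def)
      then show False using g by blast
    qed
    then show ?thesis using assms(2) by (simp add: PS_def)
  next
    case False then show ?thesis using assms(1) by (simp add: PS_def)
  qed
  then show "ps_mult \<phi> \<psi> \<gamma> = 0" unfolding ps_mult_def by (intro sum.neutral) auto
qed

lemma ps_mult_add: "ps_mult (\<phi> + \<phi>') \<psi> = ps_mult \<phi> \<psi> + ps_mult \<phi>' \<psi>"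
  by (simp add: ps_mult_def fun_eq_iff sum.distrib[symmetric] algebra_simps)

lemma ps_mult_sc: "ps_mult (sc c \<phi>) \<psi> = sc c (ps_mult \<phi> \<psi>)"
  by (simp add: ps_mult_def fun_eq_iff sc_def sum_distrib_left algebra_simps)

lemma ps_mult_zero: "ps_mult 0 \<psi> = 0"
  by (simp add: ps_mult_def fun_eq_iff)



lemma contr_assoc:
  assumes F: "F \<in> DP r"
  shows "contr (ps_mult \<phi> \<psi>) F = contr \<psi> (contr \<phi> F)"
proof (rule ext)
  fix \<gamma> :: "nat \<Rightarrow> nat"
  let ?G = "contr \<phi> F"
  let ?S = "{\<delta>. F \<delta> \<noteq> 0}"
  let ?D = "down F"
  have fS: "finite ?S" using DP_fin[OF F] .
  have fD: "finite ?D" using finite_down[OF F] .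
  have "contr \<psi> ?G \<gamma> = (\<Sum>\<beta>\<in>{\<beta>. ?G \<beta> \<noteq> 0}. if \<gamma> \<le> \<beta> then \<psi> (\<beta> - \<gamma>) * ?G \<beta> else 0)"
    by (simp only: contr_def[of \<psi> ?G])
  also have "\<dots> = (\<Sum>\<beta>\<in>?D. if \<gamma> \<le> \<beta> then \<psi> (\<beta> - \<gamma>) * ?G \<beta> else 0)"
    by (rule sum.mono_neutral_left[OF fD]) (auto dest: contr_supp)
  also have "\<dots> = (\<Sum>\<beta>\<in>?D. \<Sum>\<delta>\<in>?S. if \<gamma> \<le> \<beta> \<and> \<beta> \<le> \<delta> then \<psi> (\<beta> - \<gamma>) * (\<phi> (\<delta> - \<beta>) * F \<delta>) else 0)"
  proof (rule sum.cong[OF refl])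
    fix \<beta>
    show "(if \<gamma> \<le> \<beta> then \<psi> (\<beta> - \<gamma>) * ?G \<beta> else 0) = (\<Sum>\<delta>\<in>?S. if \<gamma> \<le> \<beta> \<and> \<beta> \<le> \<delta> then \<psi> (\<beta> - \<gamma>) * (\<phi> (\<delta> - \<beta>) * F \<delta>) else 0)"
    proof (cases "\<gamma> \<le> \<beta>")
      case True
      have "\<psi> (\<beta> - \<gamma>) * ?G \<beta> = (\<Sum>\<delta>\<in>?S. \<psi> (\<beta> - \<gamma>) * (if \<beta> \<le> \<delta> then \<phi> (\<delta> - \<beta>) * F \<delta> else 0))"
        by (simp add: contr_def sum_distrib_left)
      also have "\<dots> = (\<Sum>\<delta>\<in>?S. if \<gamma> \<le> \<beta> \<and> \<beta> \<le> \<delta> then \<psi> (\<beta> - \<gamma>) * (\<phi> (\<delta> - \<beta>) * F \<delta>) else 0)"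
        using True by (intro sum.cong) auto
      finally show ?thesis using True by simp
    next
      case False then show ?thesis by (simp add: sum.neutral)
    qed
  qed
  also have "\<dots> = (\<Sum>\<delta>\<in>?S. \<Sum>\<beta>\<in>?D. if \<gamma> \<le> \<beta> \<and> \<beta> \<le> \<delta> then \<psi> (\<beta> - \<gamma>) * (\<phi> (\<delta> - \<beta>) * F \<delta>) else 0)"
    by (rule sum.swap)
  also have "\<dots> = (\<Sum>\<delta>\<in>?S. if \<gamma> \<le> \<delta> then ps_mult \<phi> \<psi> (\<delta> - \<gamma>) * F \<delta> else 0)"
  proof (rule sum.cong[OF refl])
    fix \<delta> assume \<delta>: "\<delta> \<in> ?S"
    show "(\<Sum>\<beta>\<in>?D. if \<gamma> \<le> \<beta> \<and> \<beta> \<le> \<delta> then \<psi> (\<beta> - \<gamma>) * (\<phi> (\<delta> - \<beta>) * F \<delta>) else 0)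
        = (if \<gamma> \<le> \<delta> then ps_mult \<phi> \<psi> (\<delta> - \<gamma>) * F \<delta> else 0)"
    proof (cases "\<gamma> \<le> \<delta>")
      case False
      have "\<not> (\<gamma> \<le> \<beta> \<and> \<beta> \<le> \<delta>)" for \<beta> using False order_trans by blast
      then have "\<forall>\<beta>\<in>?D. (if \<gamma> \<le> \<beta> \<and> \<beta> \<le> \<delta> then \<psi> (\<beta> - \<gamma>) * (\<phi> (\<delta> - \<beta>) * F \<delta>) else 0) = 0" by auto
      from sum.neutral[OF this] show ?thesis using False by simp
    next
      case True
      have "(\<Sum>\<beta>\<in>?D. if \<gamma> \<le> \<beta> \<and> \<beta> \<le> \<delta> then \<psi> (\<beta> - \<gamma>) * (\<phi> (\<delta> - \<beta>) * F \<delta>) else 0)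
          = (\<Sum>\<beta>\<in>{\<beta>\<in>?D. \<gamma> \<le> \<beta> \<and> \<beta> \<le> \<delta>}. \<psi> (\<beta> - \<gamma>) * (\<phi> (\<delta> - \<beta>) * F \<delta>))"
        by (rule sum.inter_filter[OF fD, symmetric])
      also have "{\<beta>\<in>?D. \<gamma> \<le> \<beta> \<and> \<beta> \<le> \<delta>} = {\<beta>. \<gamma> \<le> \<beta> \<and> \<beta> \<le> \<delta>}"
        using \<delta> by (auto simp: down_def)
      also have "(\<Sum>\<beta>\<in>{\<beta>. \<gamma> \<le> \<beta> \<and> \<beta> \<le> \<delta>}. \<psi> (\<beta> - \<gamma>) * (\<phi> (\<delta> - \<beta>) * F \<delta>))
          = (\<Sum>\<alpha>\<in>{\<alpha>. \<alpha> \<le> \<delta> - \<gamma>}. \<phi> \<alpha> * \<psi> (\<delta> - \<gamma> - \<alpha>) * F \<delta>)"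
      proof (rule sum.reindex_bij_witness[where i="\<lambda>\<alpha>. \<delta> - \<alpha>" and j="\<lambda>\<beta>. \<delta> - \<beta>"])
        fix \<beta> :: "nat \<Rightarrow> nat" assume "\<beta> \<in> {\<beta>. \<gamma> \<le> \<beta> \<and> \<beta> \<le> \<delta>}"
        then have b: "\<And>k. \<gamma> k \<le> \<beta> k" "\<And>k. \<beta> k \<le> \<delta> k" by (auto simp: le_fun_def)
        show "\<delta> - (\<delta> - \<beta>) = \<beta>" using b by (simp add: fun_eq_iff)
        show "\<delta> - \<beta> \<in> {\<alpha>. \<alpha> \<le> \<delta> - \<gamma>}" using b by (simp add: le_fun_def diff_le_mono2)
        have e1: "\<delta> - \<gamma> - (\<delta> - \<beta>) = \<beta> - \<gamma>"
        proof (rule ext)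
          fix k have "\<gamma> k \<le> \<beta> k" "\<beta> k \<le> \<delta> k" using b by auto
          then show "(\<delta> - \<gamma> - (\<delta> - \<beta>)) k = (\<beta> - \<gamma>) k" by simp
        qed
        show "\<phi> (\<delta> - \<beta>) * \<psi> (\<delta> - \<gamma> - (\<delta> - \<beta>)) * F \<delta> = \<psi> (\<beta> - \<gamma>) * (\<phi> (\<delta> - \<beta>) * F \<delta>)"
          unfolding e1 by (simp add: algebra_simps)
      next
        fix \<alpha> :: "nat \<Rightarrow> nat" assume "\<alpha> \<in> {\<alpha>. \<alpha> \<le> \<delta> - \<gamma>}"
        then have a: "\<And>k. \<alpha> k \<le> \<delta> k - \<gamma> k" by (simp add: le_fun_def)
        have g: "\<And>k. \<gamma> k \<le> \<delta> k" using True by (simp add: le_fun_def)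
        show "\<delta> - (\<delta> - \<alpha>) = \<alpha>"
        proof (rule ext)
          fix k have "\<alpha> k \<le> \<delta> k - \<gamma> k" "\<gamma> k \<le> \<delta> k" using a g by auto
          then show "(\<delta> - (\<delta> - \<alpha>)) k = \<alpha> k" by simp
        qed
        show "\<delta> - \<alpha> \<in> {\<beta>. \<gamma> \<le> \<beta> \<and> \<beta> \<le> \<delta>}"
          unfolding mem_Collect_eq le_fun_def
        proof (intro conjI allI)
          fix k have "\<alpha> k \<le> \<delta> k - \<gamma> k" "\<gamma> k \<le> \<delta> k" using a g by auto
          then show "\<gamma> k \<le> (\<delta> - \<alpha>) k" "(\<delta> - \<alpha>) k \<le> \<delta> k" by simp_all
        qed
      qed
      also have "\<dots> = ps_mult \<phi> \<psi> (\<delta> - \<gamma>) * F \<delta>"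
        by (simp add: ps_mult_def sum_distrib_right)
      finally show ?thesis using True by simp
    qed
  qed
  also have "\<dots> = contr (ps_mult \<phi> \<psi>) F \<gamma>" by (simp add: contr_def)
  finally show "contr (ps_mult \<phi> \<psi>) F \<gamma> = contr \<psi> ?G \<gamma>" by simp
qed



lemma deg_iff:
  assumes fDP: "f \<in> DP r" and \<phi>: "\<phi> \<in> PS r"
  shows "ann_pow r f \<phi> k \<longleftrightarrow> (\<forall>\<beta>. contr \<phi> f \<beta> \<noteq> 0 \<longrightarrow> int (tdeg r \<beta>) < k)"
proof
  assume a: "ann_pow r f \<phi> k"
  show "\<forall>\<beta>. contr \<phi> f \<beta> \<noteq> 0 \<longrightarrow> int (tdeg r \<beta>) < k"
  proof (intro allI impI)
    fix \<beta> assume nz: "contr \<phi> f \<beta> \<noteq> 0"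
    show "int (tdeg r \<beta>) < k"
    proof (rule ccontr)
      assume ge: "\<not> int (tdeg r \<beta>) < k"
      have GD: "contr \<phi> f \<in> DP r" using fDP by (rule contr_DP)
      have bm: "\<beta> \<in> midx r" using GD nz by (rule DP_supp)
      define \<psi> where "\<psi> = (\<lambda>\<alpha>. if \<alpha> = \<beta> then 1 else (0::'a))"
      have "\<psi> \<in> mpow r k" using bm ge by (auto simp: \<psi>_def mpow_def PS_def)
      then have "ps_mult \<phi> \<psi> \<in> Ann r f" using a unfolding ann_pow_def by blast
      then have "contr (ps_mult \<phi> \<psi>) f = 0" by (simp add: Ann_def)
      then have c0: "contr \<psi> (contr \<phi> f) = 0" using contr_assoc[OF fDP, of \<phi> \<psi>] by simp
      have "contr \<psi> (contr \<phi> f) 0 = (\<Sum>\<beta>'\<in>{\<beta>'. contr \<phi> f \<beta>' \<noteq> 0}. if \<beta>' = \<beta> then contr \<phi> f \<beta>' else 0)"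
        unfolding contr_def[of \<psi> "contr \<phi> f"] by (intro sum.cong) (auto simp: \<psi>_def)
      also have "\<dots> = contr \<phi> f \<beta>" using DP_fin[OF GD] nz by (simp add: sum.delta')
      finally have "contr \<psi> (contr \<phi> f) 0 = contr \<phi> f \<beta>" .
      then show False using nz c0 by simp
    qed
  qed
next
  assume d: "\<forall>\<beta>. contr \<phi> f \<beta> \<noteq> 0 \<longrightarrow> int (tdeg r \<beta>) < k"
  show "ann_pow r f \<phi> k" unfolding ann_pow_def Ann_def
  proof (intro ballI CollectI conjI)
    fix \<psi> :: "(nat \<Rightarrow> nat) \<Rightarrow> 'a" assume \<psi>: "\<psi> \<in> mpow r k"
    show "ps_mult \<phi> \<psi> \<in> PS r" using ps_mult_PS[OF \<phi>] \<psi> by (simp add: mpow_def)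
    have "contr \<psi> (contr \<phi> f) = 0"
    proof (rule ext)
      fix \<gamma>
      have "(if \<gamma> \<le> \<beta> then \<psi> (\<beta> - \<gamma>) * contr \<phi> f \<beta> else 0) = 0" if "contr \<phi> f \<beta> \<noteq> 0" for \<beta>
      proof -
        have l1: "int (tdeg r \<beta>) < k" using d that by blast
        have l2: "int (tdeg r (\<beta> - \<gamma>)) \<le> int (tdeg r \<beta>)" using tdeg_diff_le[of r \<beta> \<gamma>] by simp
        have "int (tdeg r (\<beta> - \<gamma>)) < k" using l1 l2 by linarith
        then have "\<psi> (\<beta> - \<gamma>) = 0" using \<psi> by (simp add: mpow_def)
        then show ?thesis by simp
      qed
      then show "contr \<psi> (contr \<phi> f) \<gamma> = 0 \<gamma>"
        unfolding contr_def[of \<psi> "contr \<phi> f"] zero_fun_def by (intro sum.neutral) blast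
    qed
    then show "contr (ps_mult \<phi> \<psi>) f = 0" using contr_assoc[OF fDP, of \<phi> \<psi>] by simp
  qed
qed


lemma subspace_PS: "vs.subspace (PS r)"
  by (auto simp: vs.subspace_def PS_def sc_def)

lemma subspace_mpow: "vs.subspace (mpow r s)"
  by (auto simp: vs.subspace_def mpow_def PS_def sc_def)

lemma subspace_Ann: "vs.subspace (Ann r f)"
proof (rule vs.subspaceI)
  show "0 \<in> Ann r f" using vs.subspace_0[OF subspace_PS] by (simp add: Ann_def contr_zero)
  fix x y assume "x \<in> Ann r f" "y \<in> Ann r f"
  then show "x + y \<in> Ann r f" by (auto simp: Ann_def contr_add intro: vs.subspace_add[OF subspace_PS])
next
  fix c x assume "x \<in> Ann r f"
  then show "sc c x \<in> Ann r f"
    by (auto simp: Ann_def contr_sc intro: vs.subspace_scale[OF subspace_PS])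
qed

lemma subspace_ssum: "vs.subspace U \<Longrightarrow> vs.subspace W \<Longrightarrow> vs.subspace (ssum U W)"
  unfolding ssum_def by (rule vs.subspace_sums)

lemma subspace_mA: "vs.subspace (mA_pre r f i)"
  unfolding mA_pre_def by (intro subspace_ssum subspace_mpow subspace_Ann)

lemma mA_PS: "mA_pre r f i \<subseteq> PS r"
proof
  fix x assume "x \<in> mA_pre r f i"
  then obtain u w where "x = u + w" "u \<in> mpow r i" "w \<in> Ann r f" by (auto simp: mA_pre_def ssum_def)
  then show "x \<in> PS r" using subspace_PS[unfolded vs.subspace_def]
    by (auto simp: mpow_def Ann_def)
qed

lemma subspace_annset: "vs.subspace {\<phi> \<in> mA_pre r f i. ann_pow r f \<phi> k}"
proof -
  have s: "vs.subspace (Ann r f)" by (rule subspace_Ann)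
  show ?thesis unfolding vs.subspace_def
  proof (intro conjI ballI allI)
    show "0 \<in> {\<phi> \<in> mA_pre r f i. ann_pow r f \<phi> k}"
      using vs.subspace_0[OF subspace_mA] vs.subspace_0[OF s] by (simp add: ann_pow_def ps_mult_zero)
  next
    fix x y assume "x \<in> {\<phi> \<in> mA_pre r f i. ann_pow r f \<phi> k}" "y \<in> {\<phi> \<in> mA_pre r f i. ann_pow r f \<phi> k}"
    then show "x + y \<in> {\<phi> \<in> mA_pre r f i. ann_pow r f \<phi> k}"
      using vs.subspace_add[OF subspace_mA] vs.subspace_add[OF s]
      by (auto simp: ann_pow_def ps_mult_add)
  next
    fix c x assume "x \<in> {\<phi> \<in> mA_pre r f i. ann_pow r f \<phi> k}"
    then show "sc c x \<in> {\<phi> \<in> mA_pre r f i. ann_pow r f \<phi> k}"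
      using vs.subspace_scale[OF subspace_mA] vs.subspace_scale[OF s]
      by (auto simp: ann_pow_def ps_mult_sc)
  qed
qed

lemma subspace_C: "vs.subspace (C_pre r f j a i)"
  unfolding C_pre_def by (intro subspace_ssum subspace_annset subspace_mA)

lemma subspace_act: "vs.subspace (act (mpow r s) f)"
  unfolding vs.subspace_def act_def
proof (intro conjI ballI allI)
  show "0 \<in> (\<lambda>\<phi>. contr \<phi> f) ` mpow r s"
    using vs.subspace_0[OF subspace_mpow] contr_zero by (metis image_eqI)
next
  fix x y assume "x \<in> (\<lambda>\<phi>. contr \<phi> f) ` mpow r s" "y \<in> (\<lambda>\<phi>. contr \<phi> f) ` mpow r s"
  then obtain u v where "x = contr u f" "y = contr v f" "u \<in> mpow r s" "v \<in> mpow r s" by blast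
  then show "x + y \<in> (\<lambda>\<phi>. contr \<phi> f) ` mpow r s"
    using vs.subspace_add[OF subspace_mpow] contr_add by (metis image_eqI)
next
  fix c x assume "x \<in> (\<lambda>\<phi>. contr \<phi> f) ` mpow r s"
  then obtain u where "x = contr u f" "u \<in> mpow r s" by blast
  then show "sc c x \<in> (\<lambda>\<phi>. contr \<phi> f) ` mpow r s"
    using vs.subspace_scale[OF subspace_mpow] contr_sc by (metis image_eqI)
qed

lemma subspace_le_deg: "vs.subspace V \<Longrightarrow> vs.subspace (le_deg r V t)"
  unfolding vs.subspace_def le_deg_def
  by (auto simp: sc_def) (metis add.right_neutral)



lemma mpow_mono: "s \<le> s' \<Longrightarrow> mpow r s' \<subseteq> mpow r s"
  by (auto simp: mpow_def)

lemma ann_pow_mono: "ann_pow r f \<phi> s \<Longrightarrow> s \<le> s' \<Longrightarrow> ann_pow r f \<phi> s'"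
  unfolding ann_pow_def using mpow_mono[of s s' r] by blast

lemma ssumI: "u \<in> U \<Longrightarrow> w \<in> W \<Longrightarrow> u + w \<in> ssum U W"
  by (auto simp: ssum_def)

lemma mpow_mA: "\<mu> \<in> mpow r i \<Longrightarrow> \<mu> \<in> mA_pre r f i"
  using ssumI[of \<mu> "mpow r i" 0 "Ann r f"] vs.subspace_0[OF subspace_Ann, of r f] by (simp add: mA_pre_def)

lemma mA_elim:
  assumes "\<phi> \<in> mA_pre r f i"
  obtains \<mu> where "\<mu> \<in> mpow r i" "contr \<phi> f = contr \<mu> f"
proof -
  obtain \<mu> \<nu> where "\<phi> = \<mu> + \<nu>" "\<mu> \<in> mpow r i" "\<nu> \<in> Ann r f"
    using assms by (auto simp: mA_pre_def ssum_def)
  then have "contr \<phi> f = contr \<mu> f" by (simp add: contr_add Ann_def)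
  then show ?thesis using that \<open>\<mu> \<in> mpow r i\<close> by blast
qed

lemma ssumE: "x \<in> ssum U W \<Longrightarrow> (\<And>u w. x = u + w \<Longrightarrow> u \<in> U \<Longrightarrow> w \<in> W \<Longrightarrow> P) \<Longrightarrow> P"
  by (auto simp: ssum_def)

lemma first_iso:
  fixes f :: "(nat \<Rightarrow> nat) \<Rightarrow> 'k::field" and J a i :: int
  assumes fDP: "f \<in> DP r"
  shows "quot_iso (C_pre r f J a i) (C_pre r f J (a + 1) i)
           (le_deg r (act (mpow r i) f) (J - a - i))
           (ssum (le_deg r (act (mpow r i) f) (J - a - 1 - i))
                 (le_deg r (act (mpow r (i + 1)) f) (J - a - i)))"
proof -
  define t where "t = J - a - i"
  define W where "W = {\<phi> \<in> mA_pre r f i. ann_pow r f \<phi> (t + 1)}"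
  define W' where "W' = {\<phi> \<in> mA_pre r f i. ann_pow r f \<phi> t}"
  define M where "M = mA_pre r f (i + 1)"
  define V' where "V' = le_deg r (act (mpow r i) f) t"
  define U' where "U' = ssum (le_deg r (act (mpow r i) f) (t - 1)) (le_deg r (act (mpow r (i + 1)) f) t)"
  have e1: "J + 1 - a - i = t + 1" "J + 1 - (a + 1) - i = t" "J - a - 1 - i = t - 1" "J - a - i = t"
    by (simp_all add: t_def)
  have V: "C_pre r f J a i = ssum W M" unfolding C_pre_def W_def M_def e1 ..
  have U: "C_pre r f J (a + 1) i = ssum W' M" unfolding C_pre_def W'_def M_def e1 ..
  have degW: "ann_pow r f \<phi> s \<longleftrightarrow> (\<forall>\<beta>. contr \<phi> f \<beta> \<noteq> 0 \<longrightarrow> int (tdeg r \<beta>) < s)"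
    if "\<phi> \<in> mA_pre r f i" for \<phi> s
    using deg_iff[OF fDP] mA_PS that by blast
  have sV': "vs.subspace V'" unfolding V'_def by (intro subspace_le_deg subspace_act)
  have WmA: "W \<subseteq> mA_pre r f i" "W' \<subseteq> mA_pre r f i" by (auto simp: W_def W'_def)
  have sM: "vs.subspace M" unfolding M_def by (rule subspace_mA)
  have sW: "vs.subspace W" "vs.subspace W'" unfolding W_def W'_def by (rule subspace_annset)+
  have p0: "contr 0 f = 0" by (rule contr_zero)
  have pdiff: "contr (x - y) f = contr x f - contr y f" for x y by (rule contr_diff)
  show ?thesis unfolding V U e1 V'_def[symmetric] U'_def[symmetric]
  proof (rule quot_iso_Z[where W = W and p = "\<lambda>\<phi>. contr \<phi> f"])
    show "vs.subspace (ssum W M)" by (intro subspace_ssum sW sM)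
    show "vs.subspace (ssum W' M)" by (intro subspace_ssum sW sM)
    show "vs.subspace W" by (rule sW)
    show "vs.subspace U'" unfolding U'_def by (intro subspace_ssum subspace_le_deg subspace_act)
    have W'W: "W' \<subseteq> W" unfolding W_def W'_def using ann_pow_mono[of r f _ t "t + 1"] by auto
    show "ssum W' M \<subseteq> ssum W M" using W'W by (auto simp: ssum_def)
    show "W \<subseteq> ssum W M"
    proof
      fix w assume "w \<in> W" then show "w \<in> ssum W M" using ssumI[of w W 0 M] vs.subspace_0[OF sM] by simp
    qed
    show "U' \<subseteq> V'"
    proof
      fix y assume "y \<in> U'"
      then obtain y1 y2 where y: "y = y1 + y2" "y1 \<in> le_deg r (act (mpow r i) f) (t - 1)"
        "y2 \<in> le_deg r (act (mpow r (i + 1)) f) t" unfolding U'_def by (auto elim: ssumE)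
      have "y1 \<in> V'" using y(2) by (auto simp: V'_def le_deg_def)
      moreover have "act (mpow r (i + 1)) f \<subseteq> act (mpow r i) f"
        unfolding act_def using mpow_mono[of i "i + 1" r] by auto
      then have "y2 \<in> V'" using y(3) by (auto simp: V'_def le_deg_def)
      ultimately show "y \<in> V'" using y(1) vs.subspace_add[OF sV'] by blast
    qed
    show "contr (x + y) f = contr x f + contr y f" for x y by (rule contr_add)
    show "contr (sc c x) f = sc c (contr x f)" for c x by (rule contr_sc)
    show "(\<lambda>\<phi>. contr \<phi> f) ` W \<subseteq> V'"
    proof clarify
      fix w assume w: "w \<in> W"
      then have wm: "w \<in> mA_pre r f i" and aw: "ann_pow r f w (t + 1)" by (auto simp: W_def)
      obtain \<mu> where \<mu>: "\<mu> \<in> mpow r i" "contr w f = contr \<mu> f" using mA_elim[OF wm] by blast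
      have "\<forall>\<beta>. contr w f \<beta> \<noteq> 0 \<longrightarrow> int (tdeg r \<beta>) < t + 1" using degW[OF wm] aw by blast
      then show "contr w f \<in> V'" using \<mu> unfolding V'_def le_deg_def act_def by force
    qed
    show "\<forall>v\<in>ssum W M. \<exists>w\<in>W. v - w \<in> ssum W' M"
    proof
      fix v assume "v \<in> ssum W M"
      then obtain w m where "v = w + m" "w \<in> W" "m \<in> M" by (auto elim: ssumE)
      moreover have "m \<in> ssum W' M" using ssumI[of 0 W' m M] vs.subspace_0[OF sW(2)] \<open>m \<in> M\<close> by simp
      ultimately show "\<exists>w\<in>W. v - w \<in> ssum W' M" by force
    qed
    show "\<forall>y\<in>V'. \<exists>w\<in>W. y - contr w f \<in> U'"
    proof
      fix y assume "y \<in> V'"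
      then obtain \<mu> where \<mu>: "\<mu> \<in> mpow r i" "y = contr \<mu> f"
        and dy: "\<forall>\<beta>. y \<beta> \<noteq> 0 \<longrightarrow> int (tdeg r \<beta>) \<le> t"
        unfolding V'_def le_deg_def act_def by blast
      have \<mu>m: "\<mu> \<in> mA_pre r f i" by (rule mpow_mA[OF \<mu>(1)])
      have "ann_pow r f \<mu> (t + 1)" unfolding degW[OF \<mu>m] using dy \<mu>(2) by force
      then have "\<mu> \<in> W" using \<mu>m by (simp add: W_def)
      moreover have "y - contr \<mu> f \<in> U'" using \<mu>(2) vs.subspace_0[OF \<open>vs.subspace U'\<close>] by simp
      ultimately show "\<exists>w\<in>W. y - contr w f \<in> U'" by blast
    qed
    show "\<forall>w\<in>W. contr w f \<in> U' \<longleftrightarrow> w \<in> ssum W' M"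
    proof
      fix w assume w: "w \<in> W"
      then have wm: "w \<in> mA_pre r f i" and aw: "ann_pow r f w (t + 1)" by (auto simp: W_def)
      have dw: "\<forall>\<beta>. contr w f \<beta> \<noteq> 0 \<longrightarrow> int (tdeg r \<beta>) < t + 1" using degW[OF wm] aw by blast
      show "contr w f \<in> U' \<longleftrightarrow> w \<in> ssum W' M"
      proof
        assume "w \<in> ssum W' M"
        then obtain w1 w2 where ww: "w = w1 + w2" "w1 \<in> W'" "w2 \<in> M" by (auto elim: ssumE)
        have w1m: "w1 \<in> mA_pre r f i" and aw1: "ann_pow r f w1 t" using ww(2) by (auto simp: W'_def)
        have dw1: "\<forall>\<beta>. contr w1 f \<beta> \<noteq> 0 \<longrightarrow> int (tdeg r \<beta>) < t" using degW[OF w1m] aw1 by blast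
        obtain \<mu>1 where \<mu>1: "\<mu>1 \<in> mpow r i" "contr w1 f = contr \<mu>1 f" using mA_elim[OF w1m] by blast
        obtain \<mu>2 where \<mu>2: "\<mu>2 \<in> mpow r (i + 1)" "contr w2 f = contr \<mu>2 f"
          using mA_elim[of w2 r f "i + 1"] ww(3) by (auto simp: M_def)
        have pw: "contr w f = contr w1 f + contr w2 f" using ww(1) contr_add by blast
        have y1: "contr w1 f \<in> le_deg r (act (mpow r i) f) (t - 1)"
          using dw1 \<mu>1 unfolding le_deg_def act_def by force
        have eq2: "contr w2 f = contr w f - contr w1 f" using pw by simp
        have "\<forall>\<beta>. contr w2 f \<beta> \<noteq> 0 \<longrightarrow> int (tdeg r \<beta>) \<le> t"
        proof (intro allI impI)
          fix \<beta> assume nz: "contr w2 f \<beta> \<noteq> 0"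
          have "contr w2 f \<beta> = contr w f \<beta> - contr w1 f \<beta>" using eq2 by simp
          then have "contr w f \<beta> \<noteq> 0 \<or> contr w1 f \<beta> \<noteq> 0" using nz by auto
          then show "int (tdeg r \<beta>) \<le> t"
          proof
            assume "contr w f \<beta> \<noteq> 0" then have "int (tdeg r \<beta>) < t + 1" using dw by blast
            then show ?thesis by simp
          next
            assume "contr w1 f \<beta> \<noteq> 0" then have "int (tdeg r \<beta>) < t" using dw1 by blast
            then show ?thesis by simp
          qed
        qed
        then have y2: "contr w2 f \<in> le_deg r (act (mpow r (i + 1)) f) t"
          using \<mu>2 unfolding le_deg_def act_def by force
        show "contr w f \<in> U'" unfolding pw U'_def by (rule ssumI[OF y1 y2])
      next
        assume "contr w f \<in> U'"
        then obtain y1 y2 where y: "contr w f = y1 + y2" "y1 \<in> le_deg r (act (mpow r i) f) (t - 1)"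
          "y2 \<in> le_deg r (act (mpow r (i + 1)) f) t" unfolding U'_def by (auto elim: ssumE)
        obtain \<mu>1 where \<mu>1: "\<mu>1 \<in> mpow r i" "y1 = contr \<mu>1 f"
          and d1: "\<forall>\<beta>. y1 \<beta> \<noteq> 0 \<longrightarrow> int (tdeg r \<beta>) \<le> t - 1"
          using y(2) unfolding le_deg_def act_def by blast
        obtain \<mu>2 where \<mu>2: "\<mu>2 \<in> mpow r (i + 1)" "y2 = contr \<mu>2 f"
          using y(3) unfolding le_deg_def act_def by blast
        define \<nu> where "\<nu> = w - \<mu>1 - \<mu>2"
        have wPS: "w \<in> PS r" using wm mA_PS by blast
        have \<mu>PS: "\<mu>1 \<in> PS r" "\<mu>2 \<in> PS r" using \<mu>1(1) \<mu>2(1) by (auto simp: mpow_def)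
        have "\<nu> \<in> PS r" unfolding \<nu>_def using wPS \<mu>PS vs.subspace_diff[OF subspace_PS] by blast
        moreover have "contr \<nu> f = 0" unfolding \<nu>_def pdiff using y(1) \<mu>1(2) \<mu>2(2) by simp
        ultimately have \<nu>A: "\<nu> \<in> Ann r f" by (simp add: Ann_def)
        have \<mu>1m: "\<mu>1 \<in> mA_pre r f i" by (rule mpow_mA[OF \<mu>1(1)])
        have "ann_pow r f \<mu>1 t" unfolding degW[OF \<mu>1m] using d1 \<mu>1(2) by force
        then have "\<mu>1 \<in> W'" using \<mu>1m by (simp add: W'_def)
        moreover have "\<mu>2 + \<nu> \<in> M" unfolding M_def mA_pre_def by (rule ssumI[OF \<mu>2(1) \<nu>A])
        moreover have "w = \<mu>1 + (\<mu>2 + \<nu>)" unfolding \<nu>_def by simp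
        ultimately show "w \<in> ssum W' M" using ssumI by metis
      qed
    qed
  qed
qed



theorem lemma1p25:
  fixes f :: "(nat \<Rightarrow> nat) \<Rightarrow> 'k::field" and r j :: nat and a i :: int
  assumes "f \<in> DP r" and "f \<noteq> 0" and "dp_deg r f = j" and "0 \<le> a"
  shows "quot_iso (C_pre r f (int j) a i) (C_pre r f (int j) (a + 1) i)
           (le_deg r (act (mpow r i) f) (int j - a - i))
           (ssum (le_deg r (act (mpow r i) f) (int j - a - 1 - i))
                 (le_deg r (act (mpow r (i + 1)) f) (int j - a - i)))
       \<and> quot_iso (dual_quot (C_pre r f (int j) a (int j - a - i)) (C_pre r f (int j) (a + 1) (int j - a - i)))
           {0}
           (le_deg r (act (mpow r (int j - a - i)) f) i)
           (ssum (le_deg r (act (mpow r (int j - a - i)) f) (i - 1))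
                 (le_deg r (act (mpow r (int j + 1 - a - i)) f) i))"
proof
  have fDP: "f \<in> DP r" by fact
  show "quot_iso (C_pre r f (int j) a i) (C_pre r f (int j) (a + 1) i)
           (le_deg r (act (mpow r i) f) (int j - a - i))
           (ssum (le_deg r (act (mpow r i) f) (int j - a - 1 - i))
                 (le_deg r (act (mpow r (i + 1)) f) (int j - a - i)))"
    using fDP by (rule first_iso)
  define i' where "i' = int j - a - i"
  have q: "quot_iso (C_pre r f (int j) a i') (C_pre r f (int j) (a + 1) i')
           (le_deg r (act (mpow r i') f) (int j - a - i'))
           (ssum (le_deg r (act (mpow r i') f) (int j - a - 1 - i'))
                 (le_deg r (act (mpow r (i' + 1)) f) (int j - a - i')))"
    using fDP by (rule first_iso)
  have e: "int j - a - i' = i" "int j - a - 1 - i' = i - 1" "i' + 1 = int j + 1 - a - i"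
    by (simp_all add: i'_def)
  have q2: "quot_iso (C_pre r f (int j) a i') (C_pre r f (int j) (a + 1) i')
           (le_deg r (act (mpow r i') f) i)
           (ssum (le_deg r (act (mpow r i') f) (i - 1))
                 (le_deg r (act (mpow r (int j + 1 - a - i)) f) i))"
    using q unfolding e .
  have supp: "\<forall>y\<in>le_deg r (act (mpow r i') f) i. \<forall>x. y x \<noteq> 0 \<longrightarrow> x \<in> down f"
    by (auto simp: le_deg_def act_def intro: contr_supp)
  have "quot_iso (dual_quot (C_pre r f (int j) a i') (C_pre r f (int j) (a + 1) i')) {0}
           (le_deg r (act (mpow r i') f) i)
           (ssum (le_deg r (act (mpow r i') f) (i - 1))
                 (le_deg r (act (mpow r (int j + 1 - a - i)) f) i))"
    by (rule quot_iso_dual[OF q2 subspace_C subspace_le_deg[OF subspace_act]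
          subspace_ssum[OF subspace_le_deg[OF subspace_act] subspace_le_deg[OF subspace_act]]
          finite_down[OF fDP] supp])
  then show "quot_iso (dual_quot (C_pre r f (int j) a (int j - a - i)) (C_pre r f (int j) (a + 1) (int j - a - i)))
           {0}
           (le_deg r (act (mpow r (int j - a - i)) f) i)
           (ssum (le_deg r (act (mpow r (int j - a - i)) f) (i - 1))
                 (le_deg r (act (mpow r (int j + 1 - a - i)) f) i))"
    unfolding i'_def .
qed

end
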